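(* Let $d_1,d_2,d_3\in\mathbb{R}^2$ be unit vectors with $d_2=R(-\theta_{12})d_1$, $d_3=R(\theta_{13})d_1$, where $0<\theta_{12},\theta_{13}<\pi$ and $\theta_{12}+\theta_{13}\ge\pi$. Let $s\in\mathbb{C}$ with $\mathrm{Re}(s)>0$. Suppose $X^1,X^2,X^3:[0,\infty)\to\mathbb{C}^2$ are bounded smooth functions satisfying on $(0,\infty)$ $$sX^1\cdot d_1^\perp=X^1_{\sigma\sigma}\cdot d_1^\perp,\quad d_1\cdot X^1_{\sigma\sigma}=0,$$ $$sX^j\cdot d_j^\perp=-X^j_{\sigma\sigma\sigma\sigma}\cdot d_j^\perp,\quad d_j\cdot X^j_{\sigma\sigma}=0\qquad(j=2,3),$$ and the eight scalar conditions at $\sigma=0$: (i) $X^1(0)=X^2(0)=X^3(0)$; (ii) $d_1\cdot X^j_\sigma+d_j\cdot X^1_\sigma-(d_1\cdot d_j)(d_1\cdot X^1_\sigma+d_j\cdot X^j_\sigma)=0$ for $j=2,3$; (iii) $X^2_{\sigma\sigma}\cdot d_2^\perp=-X^3_{\sigma\sigma}\cdot d_3^\perp$; (iv) $X^2_{\sigma\sigma\sigma}\cdot d_2^\perp=X^3_{\sigma\sigma\sigma}\cdot d_3^\perp$. Then $X^1\equiv X^2\equiv X^3\equiv0$.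
   Context: $R(\varphi)$ denotes counterclockwise rotation by $\varphi$ and $d^\perp=R(\pi/2)d$; the dot product on $\mathbb{C}^2$ is bilinear. This is the Laplace-transformed (zero initial data) linearization, around straight rays with directions $d_1$ (grain boundary) and $d_2,d_3$ (exterior surface branches) meeting at a triple junction at $\sigma=0$, of the partial differential algebraic system $X^1_t\cdot\vec n-\kappa=0$, $X^j_t\cdot\vec n+\kappa_{ss}=0$ ($j=2,3$), $X^i_\sigma\cdot X^i_{\sigma\sigma}=0$ ($i=1,2,3$), with the linearized common-point, Young angle, curvature-continuity and mass-flux-balance junction conditions (no artificial tangential conditions). *)

theory Defs
  imports "HOL-Analysis.Analysis"
begin

definition rot :: "real \<Rightarrow> real \<times> real \<Rightarrow> real \<times> real" where
  "rot phi v = (cos phi * fst v - sin phi * snd v, sin phi * fst v + cos phi * snd v)"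

definition perp :: "real \<times> real \<Rightarrow> real \<times> real" where
  "perp d = rot (pi/2) d"

definition cvec :: "real \<times> real \<Rightarrow> complex \<times> complex" where
  "cvec v = (complex_of_real (fst v), complex_of_real (snd v))"

text \<open>Bilinear (non-Hermitian) dot product on C^2.\<close>
definition cdot :: "complex \<times> complex \<Rightarrow> complex \<times> complex \<Rightarrow> complex" where
  "cdot u v = fst u * fst v + snd u * snd v"

text \<open>With S = {0..} this
  expresses C-infinity smoothness on the closed half-line (one-sided at 0).\<close>
definition higher_derivs_on :: "(nat \<Rightarrow> real \<Rightarrow> 'a::real_normed_vector) \<Rightarrow> real set \<Rightarrow> bool" where
  "higher_derivs_on D S \<longleftrightarrow>
     (\<forall>k. \<forall>t\<in>S. (D k has_vector_derivative D (Suc k) t) (at t within S))"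

end

theory Submission
  imports Defs
begin


definition hdr :: "(real \<Rightarrow> complex) \<Rightarrow> (real \<Rightarrow> complex) \<Rightarrow> bool" where
  "hdr y y' \<longleftrightarrow> (\<forall>t\<ge>0. (y has_vector_derivative y' t) (at t within {0..}))"

definition EE :: "complex \<Rightarrow> real \<Rightarrow> complex" where
  "EE c t = exp (of_real t * c)"

lemma EE_deriv: "((EE c) has_vector_derivative (c * EE c t)) (at t within S)"
proof -
  have "((\<lambda>z. exp (z * c)) has_field_derivative (exp (of_real t * c) * c)) (at (of_real t))"
    by (auto intro!: derivative_eq_intros)
  from has_vector_derivative_real_field[OF this, of S] show ?thesis
    by (simp add: EE_def[abs_def] mult.commute)
qed

lemma norm_EE: "norm (EE c t) = exp (t * Re c)"
  by (simp add: EE_def)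

lemma EE_add: "EE c (t + u) = EE c t * EE c u"
  by (simp add: EE_def distrib_right exp_add)

lemma EE_0 [simp]: "EE c 0 = 1" by (simp add: EE_def)

lemma EE_neg: "EE (-c) t * EE c t = 1"
  by (simp add: EE_def exp_minus[symmetric] exp_add[symmetric] del: exp_minus)

lemma hd_cong: "hdr y y' \<Longrightarrow> (\<And>t. t \<ge> 0 \<Longrightarrow> y' t = y'' t) \<Longrightarrow> hdr y y''"
  by (simp add: hdr_def)

lemma L1:
  assumes "hdr y (\<lambda>t. c * y t)" "t \<ge> 0"
  shows "y t = y 0 * EE c t"
proof -
  define g where "g t = y t * EE (-c) t" for t
  have "(g has_vector_derivative 0) (at t within {0..})" if "t \<in> {0..}" for t
  proof -
    have "(g has_vector_derivative (y t * (-c * EE (-c) t) + c * y t * EE (-c) t)) (at t within {0..})"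
      unfolding g_def using assms(1) that
      by (intro has_vector_derivative_mult EE_deriv) (auto simp: hdr_def)
    then show ?thesis by (simp add: algebra_simps)
  qed
  then obtain k where k: "\<And>x. x \<in> {0..} \<Longrightarrow> g x = k"
    by (rule has_vector_derivative_zero_constant[OF convex_real_interval(1)]) auto
  have "k = y 0" using k[of 0] by (simp add: g_def)
  then have "y t * EE (-c) t = y 0" using k[of t] assms(2) by (simp add: g_def)
  then have "y t * EE (-c) t * EE c t = y 0 * EE c t" by simp
  then show ?thesis by (simp add: mult.assoc EE_neg)
qed

lemma L2:
  assumes "hdr y (\<lambda>t. a * y t + C * EE b t)" "a \<noteq> b" "t \<ge> 0"
  shows "y t = (y 0 - C / (b - a)) * EE a t + C / (b - a) * EE b t"
proof -
  define z where "z t = y t - C / (b - a) * EE b t" for t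
  have "hdr z (\<lambda>t. a * z t)"
    unfolding hdr_def
  proof (intro allI impI)
    fix t :: real assume "t \<ge> 0"
    have "(z has_vector_derivative (a * y t + C * EE b t - C / (b - a) * (b * EE b t))) (at t within {0..})"
      unfolding z_def using assms(1) \<open>t \<ge> 0\<close>
      by (intro has_vector_derivative_diff has_vector_derivative_mult_right EE_deriv) (auto simp: hdr_def)
    moreover have "a * y t + C * EE b t - C / (b - a) * (b * EE b t) = a * z t"
      using assms(2) by (simp add: z_def field_simps)
    ultimately show "(z has_vector_derivative a * z t) (at t within {0..})" by simp
  qed
  from L1[OF this assms(3)] show ?thesis by (simp add: z_def algebra_simps)
qed

lemma L_affine:
  assumes "hdr y (\<lambda>t. c)" "t \<ge> 0"
  shows "y t = y 0 + of_real t * c"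
proof -
  define g where "g t = y t - of_real t * c" for t
  have "(g has_vector_derivative 0) (at t within {0..})" if "t \<in> {0..}" for t
  proof -
    have "(g has_vector_derivative (c - 1 * c)) (at t within {0..})"
      unfolding g_def using assms(1) that
      by (intro has_vector_derivative_diff has_vector_derivative_mult_left has_vector_derivative_of_real)
         (auto simp: hdr_def intro!: derivative_eq_intros)
    then show ?thesis by simp
  qed
  then obtain k where k: "\<And>x. x \<in> {0..} \<Longrightarrow> g x = k"
    by (rule has_vector_derivative_zero_constant[OF convex_real_interval(1)]) auto
  show ?thesis using k[of 0] k[of t] assms(2) by (simp add: g_def algebra_simps)
qed

lemma G1:
  assumes "Re c > 0" "\<And>t. t \<ge> 0 \<Longrightarrow> norm (A * EE c t) \<le> M"
  shows "A = 0"
proof (rule ccontr)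
  assume "A \<noteq> 0"
  then have nA: "norm A > 0" by simp
  define t where "t = (\<bar>M\<bar> / norm A + 1) / Re c"
  have t0: "t \<ge> 0" using assms(1) nA by (simp add: t_def)
  have "t * Re c = \<bar>M\<bar> / norm A + 1" using assms(1) by (simp add: t_def)
  then have "exp (t * Re c) > \<bar>M\<bar> / norm A"
    using exp_ge_add_one_self[of "t * Re c"] by linarith
  then have "norm A * exp (t * Re c) > \<bar>M\<bar>"
    using nA by (simp add: field_simps)
  moreover have "norm A * exp (t * Re c) \<le> M" using assms(2)[OF t0] by (simp add: norm_mult norm_EE)
  ultimately show False by linarith
qed

lemma G2:
  assumes "Re a > 0" "Re b > 0" "a \<noteq> b"
    and bd: "\<And>t. t \<ge> 0 \<Longrightarrow> norm (A * EE a t + C * EE b t) \<le> M"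
  shows "A = 0 \<and> C = 0"
proof -
  define \<tau> where "\<tau> = 1 / norm (a - b)"
  have tp: "\<tau> > 0" using assms(3) by (simp add: \<tau>_def)
  have ne: "EE a \<tau> \<noteq> EE b \<tau>"
  proof
    assume "EE a \<tau> = EE b \<tau>"
    then have "exp (of_real \<tau> * (a - b)) = 1"
      by (simp add: EE_def right_diff_distrib exp_diff)
    then obtain n :: int where n: "Re (of_real \<tau> * (a - b)) = 0" "Im (of_real \<tau> * (a - b)) = of_int (2 * n) * pi"
      by (auto simp: exp_eq_1)
    have "norm (of_real \<tau> * (a - b)) = \<tau> * norm (a - b)" using tp by (simp add: norm_mult)
    also have "\<dots> = 1" using assms(3) by (simp add: \<tau>_def)
    finally have "norm (of_real \<tau> * (a - b)) = 1" .
    then have "\<bar>Im (of_real \<tau> * (a - b))\<bar> = 1"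
      using n(1) cmod_eq_Im[of "of_real \<tau> * (a - b)"] by (simp only:)
    then have "\<bar>of_int (2 * n) * pi\<bar> = 1" using n(2) by simp
    moreover have "\<bar>of_int (2 * n) * pi\<bar> = 0 \<or> \<bar>of_int (2 * n) * pi\<bar> \<ge> 2 * pi"
    proof (cases "n = 0")
      case False
      then have "\<bar>real_of_int n\<bar> \<ge> 1" by linarith
      then show ?thesis by (simp add: abs_mult)
    qed simp
    ultimately show False using pi_gt3 by linarith
  qed
  have M0: "M \<ge> 0" using bd[of 0] norm_ge_zero[of "A * EE a 0 + C * EE b 0"] by linarith
  have "A * (EE a \<tau> - EE b \<tau>) = 0"
  proof (rule G1[OF assms(1)])
    fix t :: real assume t: "t \<ge> 0"
    have eq: "A * (EE a \<tau> - EE b \<tau>) * EE a t =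
        (A * EE a (t + \<tau>) + C * EE b (t + \<tau>)) - EE b \<tau> * (A * EE a t + C * EE b t)"
      by (simp add: EE_add algebra_simps)
    have "norm (A * (EE a \<tau> - EE b \<tau>) * EE a t) \<le> M + norm (EE b \<tau>) * M"
      unfolding eq
      by (rule order_trans[OF norm_triangle_ineq4], rule add_mono, rule bd, use t tp in simp,
          simp add: norm_mult, rule mult_left_mono[OF bd[OF t]], simp)
    then show "norm (A * (EE a \<tau> - EE b \<tau>) * EE a t) \<le> M + norm (EE b \<tau>) * M" .
  qed
  then have A0: "A = 0" using ne by simp
  have "C = 0"
    by (rule G1[OF assms(2)], use bd A0 in simp)
  with A0 show ?thesis by simp
qed




lemma hd_cont: "hdr y y' \<Longrightarrow> continuous_on {0..} y"
  unfolding hdr_def by (rule continuous_on_vector_derivative) auto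

lemma ext0:
  fixes f g :: "real \<Rightarrow> complex"
  assumes "continuous_on {0..} f" "continuous_on {0..} g" "\<And>t. t > 0 \<Longrightarrow> f t = g t" "t \<ge> 0"
  shows "f t = g t"
proof (cases "t = 0")
  case False then show ?thesis using assms by simp
next
  case True
  have "(f \<longlongrightarrow> f 0) (at 0 within {0..})" "(g \<longlongrightarrow> g 0) (at 0 within {0..})"
    using assms(1,2) by (auto simp: continuous_on_def)
  then have lf: "(f \<longlongrightarrow> f 0) (at_right 0)" and lg: "(g \<longlongrightarrow> g 0) (at_right 0)"
    by (auto simp: at_within_Icc_at_right elim: tendsto_within_subset)
  have "eventually (\<lambda>t. f t = g t) (at_right 0)"
    using assms(3) by (auto simp: eventually_at_right_field intro: exI[of _ 1])
  then have "(g \<longlongrightarrow> f 0) (at_right 0)" by (metis lf Lim_transform_eventually)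
  then have "f 0 = g 0" using lg by (rule tendsto_unique[rotated]) simp
  with True show ?thesis by simp
qed

lemma hd_all_cont: "(\<And>k. hdr (b k) (b (Suc k))) \<Longrightarrow> continuous_on {0..} (b k)"
  using hd_cont by blast

lemma EE_decay:
  assumes "Re c \<le> 0" "t \<ge> 0"
  shows "norm (K * EE c t) \<le> norm K"
proof -
  have "t * Re c \<le> 0" using assms by (simp add: mult_nonneg_nonpos)
  then have "exp (t * Re c) \<le> 1" by simp
  then show ?thesis by (simp add: norm_mult norm_EE mult_left_le)
qed

lemma branch1:
  fixes b :: "nat \<Rightarrow> real \<Rightarrow> complex"
  assumes hdr: "\<And>k. hdr (b k) (b (Suc k))"
    and ode: "\<And>t. t \<ge> 0 \<Longrightarrow> b 2 t = s * b 0 t"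
    and bd: "\<And>t. t \<ge> 0 \<Longrightarrow> norm (b 0 t) \<le> M"
    and mu: "mu\<^sup>2 = s" "Re mu > 0"
  shows "b 1 0 = - mu * b 0 0" "b 0 0 = 0 \<Longrightarrow> \<forall>t\<ge>0. b 0 t = 0"
proof -
  have mu0: "mu \<noteq> 0" using mu by auto
  define u where "u t = b 1 t + mu * b 0 t" for t
  have "hdr u (\<lambda>t. b 2 t + mu * b 1 t)"
    unfolding hdr_def u_def using hdr[of 0] hdr[of 1]
    by (auto simp: hdr_def numeral_2_eq_2 intro!: has_vector_derivative_add has_vector_derivative_mult_right)
  then have "hdr u (\<lambda>t. mu * u t)"
    by (rule hd_cong) (simp add: ode u_def mu(1)[symmetric] power2_eq_square algebra_simps)
  then have uu: "u t = u 0 * EE mu t" if "t \<ge> 0" for t using L1 that by blast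
  have "hdr (b 0) (\<lambda>t. (-mu) * b 0 t + u 0 * EE mu t)"
    using hdr[of 0]
  proof (rule hd_cong)
    fix t :: real assume t: "t \<ge> 0"
    have "b (Suc 0) t = u t - mu * b 0 t" by (simp add: u_def)
    also have "\<dots> = (-mu) * b 0 t + u 0 * EE mu t" using uu[OF t] by simp
    finally show "b (Suc 0) t = (-mu) * b 0 t + u 0 * EE mu t" .
  qed
  then have bb: "b 0 t = (b 0 0 - u 0 / (mu - - mu)) * EE (-mu) t + u 0 / (mu - - mu) * EE mu t"
    if "t \<ge> 0" for t using L2[of "b 0" "-mu" "u 0" mu t] mu0 that by auto
  have "u 0 / (mu - - mu) = 0"
  proof (rule G1[OF mu(2)])
    fix t :: real assume t: "t \<ge> 0"
    have "norm (u 0 / (mu - - mu) * EE mu t) = norm (b 0 t - (b 0 0 - u 0 / (mu - - mu)) * EE (-mu) t)"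
      using bb[OF t] by simp
    also have "\<dots> \<le> M + norm (b 0 0 - u 0 / (mu - - mu)) * 1"
      by (rule order_trans[OF norm_triangle_ineq4], rule add_mono[OF bd[OF t]])
        (use EE_decay[of "-mu" t] mu(2) t in simp)
    finally show "norm (u 0 / (mu - - mu) * EE mu t) \<le> M + norm (b 0 0 - u 0 / (mu - - mu)) * 1" .
  qed
  then have u0: "u 0 = 0" using mu0 by simp
  then show "b 1 0 = - mu * b 0 0" by (simp add: u_def add_eq_0_iff)
  show "\<forall>t\<ge>0. b 0 t = 0" if "b 0 0 = 0" using bb u0 that by simp
qed




lemma hd_lin3:
  "hdr f f' \<Longrightarrow> hdr g g' \<Longrightarrow> hdr h h' \<Longrightarrow>
   hdr (\<lambda>t. f t + x * g t + y * h t) (\<lambda>t. f' t + x * g' t + y * h' t)"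
  unfolding hdr_def
  by (auto intro!: has_vector_derivative_add has_vector_derivative_mult_right)

lemma hd_lin2:
  "hdr f f' \<Longrightarrow> hdr g g' \<Longrightarrow> hdr (\<lambda>t. f t + x * g t) (\<lambda>t. f' t + x * g' t)"
  unfolding hdr_def
  by (auto intro!: has_vector_derivative_add has_vector_derivative_mult_right)

lemma hd_exp_sub:
  "hdr f f' \<Longrightarrow> hdr (\<lambda>t. f t - X * EE c t - Y * EE a t) (\<lambda>t. f' t - X * (c * EE c t) - Y * (a * EE a t))"
  unfolding hdr_def
  by (auto intro!: has_vector_derivative_diff has_vector_derivative_mult_right EE_deriv)

lemma nz_sum: "Re x > 0 \<Longrightarrow> Re y > 0 \<Longrightarrow> x + y \<noteq> 0"
proof
  assume "Re x > 0" "Re y > 0" "x + y = 0"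
  then have "Re (x + y) = 0" by simp
  with \<open>Re x > 0\<close> \<open>Re y > 0\<close> show False by simp
qed

lemma branch4:
  fixes b :: "nat \<Rightarrow> real \<Rightarrow> complex"
  assumes hdr: "\<And>k. hdr (b k) (b (Suc k))"
    and ode: "\<And>t. t \<ge> 0 \<Longrightarrow> b 4 t = - s * b 0 t"
    and bd: "\<And>t. t \<ge> 0 \<Longrightarrow> norm (b 0 t) \<le> M"
    and ac: "Re a > 0" "Re c > 0" "a \<noteq> c" "a\<^sup>2 + c\<^sup>2 = 0" "s = a\<^sup>2 * c\<^sup>2"
  shows "b 2 0 = -(a+c) * b 1 0 - a*c * b 0 0"
    "b 3 0 = -(a+c) * b 2 0 - a*c * b 1 0"
    "b 0 0 = 0 \<Longrightarrow> b 1 0 = 0 \<Longrightarrow> \<forall>t\<ge>0. b 0 t = 0"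
proof -
  define sg where "sg = a + c"
  define p where "p = a * c"
  have sg2: "sg\<^sup>2 = 2 * p" using ac(4) by (simp add: sg_def p_def power2_eq_square algebra_simps)
  have sp: "s = p\<^sup>2" using ac(5) by (simp add: p_def power_mult_distrib)
  have h0: "hdr (b 0) (b 1)" and h1: "hdr (b 1) (b 2)" and h2: "hdr (b 2) (b 3)" and h3: "hdr (b 3) (b 4)"
    using hdr[of 0] hdr[of 1] hdr[of 2] hdr[of 3] by (simp_all add: eval_nat_numeral)
  define v where "v t = b 2 t + sg * b 1 t + p * b 0 t" for t
  define v' where "v' t = b 3 t + sg * b 2 t + p * b 1 t" for t
  define v'' where "v'' t = b 4 t + sg * b 3 t + p * b 2 t" for t
  have hv: "hdr v v'" unfolding v_def[abs_def] v'_def[abs_def] by (rule hd_lin3[OF h2 h1 h0])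
  have hv': "hdr v' v''" unfolding v'_def[abs_def] v''_def[abs_def] by (rule hd_lin3[OF h3 h2 h1])
  have vv: "v'' t = sg * v' t - p * v t" if "t \<ge> 0" for t
  proof -
    have "v'' t - (sg * v' t - p * v t) = b 4 t + s * b 0 t + (2 * p - sg\<^sup>2) * b 2 t + (p\<^sup>2 - s) * b 0 t"
      by (simp add: v_def v'_def v''_def algebra_simps power2_eq_square)
    also have "\<dots> = 0" using ode[OF that] sg2 sp by simp
    finally show ?thesis by simp
  qed
  define u where "u t = v' t - c * v t" for t
  have "hdr u (\<lambda>t. v'' t + (- c) * v' t)" unfolding u_def[abs_def]
    using hd_lin2[OF hv' hv, of "-c"] by simp
  then have "hdr u (\<lambda>t. a * u t)"
    by (rule hd_cong) (simp add: vv u_def sg_def p_def algebra_simps)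
  then have uu: "u t = u 0 * EE a t" if "t \<ge> 0" for t using L1 that by blast
  have "hdr v (\<lambda>t. c * v t + u 0 * EE a t)"
    using hv
  proof (rule hd_cong)
    fix t :: real assume t: "t \<ge> 0"
    have "v' t = u t + c * v t" by (simp add: u_def)
    then show "v' t = c * v t + u 0 * EE a t" using uu[OF t] by (simp add: add.commute)
  qed
  then have vv2: "v t = (v 0 - u 0 / (a - c)) * EE c t + u 0 / (a - c) * EE a t" if "t \<ge> 0" for t
    using L2[of v c "u 0" a t] ac(3) that by auto
  define A1 where "A1 = v 0 - u 0 / (a - c)"
  define C1 where "C1 = u 0 / (a - c)"
  define Pa where "Pa = a\<^sup>2 + sg * a + p"
  define Pc where "Pc = c\<^sup>2 + sg * c + p"
  have "Pa = (a + a) * (a + c)" by (simp add: Pa_def sg_def p_def power2_eq_square algebra_simps)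
  then have Pa0: "Pa \<noteq> 0" using nz_sum[OF ac(1) ac(1)] nz_sum[OF ac(1) ac(2)] by simp
  have "Pc = (c + c) * (c + a)" by (simp add: Pc_def sg_def p_def power2_eq_square algebra_simps)
  then have Pc0: "Pc \<noteq> 0" using nz_sum[OF ac(2) ac(2)] nz_sum[OF ac(2) ac(1)] by simp
  define K1 where "K1 = A1 / Pc"
  define K2 where "K2 = C1 / Pa"
  define q0 where "q0 t = b 0 t - K1 * EE c t - K2 * EE a t" for t
  define q1 where "q1 t = b 1 t - K1 * (c * EE c t) - K2 * (a * EE a t)" for t
  define q2 where "q2 t = b 2 t - K1 * (c * (c * EE c t)) - K2 * (a * (a * EE a t))" for t
  have hq0: "hdr q0 q1" unfolding q0_def[abs_def] q1_def[abs_def] by (rule hd_exp_sub[OF h0])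
  have hq1: "hdr q1 q2" unfolding q1_def[abs_def] q2_def[abs_def]
    using hd_exp_sub[OF h1, of "K1 * c" c "K2 * a" a] by (simp add: mult.assoc)
  have qq: "q2 t = - sg * q1 t - p * q0 t" if "t \<ge> 0" for t
  proof -
    have "q2 t + sg * q1 t + p * q0 t = v t - K1 * Pc * EE c t - K2 * Pa * EE a t"
      by (simp add: q0_def q1_def q2_def v_def Pa_def Pc_def algebra_simps power2_eq_square)
    also have "\<dots> = 0" using vv2[OF that] Pa0 Pc0 by (simp add: K1_def K2_def A1_def C1_def)
    finally have e: "q2 t + sg * q1 t + p * q0 t = 0" .
    have "q2 t = (q2 t + sg * q1 t + p * q0 t) - sg * q1 t - p * q0 t" by simp
    then show ?thesis using e by simp
  qed
  define r where "r t = q1 t + c * q0 t" for t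
  have "hdr r (\<lambda>t. q2 t + c * q1 t)" unfolding r_def[abs_def] by (rule hd_lin2[OF hq1 hq0])
  then have "hdr r (\<lambda>t. (-a) * r t)"
    by (rule hd_cong) (simp add: qq r_def sg_def p_def algebra_simps)
  then have rr: "r t = r 0 * EE (-a) t" if "t \<ge> 0" for t using L1 that by blast
  have "hdr q0 (\<lambda>t. (-c) * q0 t + r 0 * EE (-a) t)"
    using hq0
  proof (rule hd_cong)
    fix t :: real assume t: "t \<ge> 0"
    have "q1 t = r t - c * q0 t" by (simp add: r_def)
    then show "q1 t = (-c) * q0 t + r 0 * EE (-a) t" using rr[OF t] by simp
  qed
  then have qq0: "q0 t = (q0 0 - r 0 / (-a - -c)) * EE (-c) t + r 0 / (-a - -c) * EE (-a) t"
    if "t \<ge> 0" for t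
    using L2[of q0 "-c" "r 0" "-a" t] ac(3) that by auto
  have "K1 = 0 \<and> K2 = 0"
  proof (rule G2[OF ac(2) ac(1) ac(3)[symmetric]])
    fix t :: real assume t: "t \<ge> 0"
    have "K1 * EE c t + K2 * EE a t = b 0 t - q0 t" by (simp add: q0_def)
    also have "norm \<dots> \<le> M + (norm (q0 0 - r 0 / (-a - -c)) + norm (r 0 / (-a - -c)))"
      apply (rule order_trans[OF norm_triangle_ineq4], rule add_mono[OF bd[OF t]])
      unfolding qq0[OF t]
      apply (rule order_trans[OF norm_triangle_ineq], rule add_mono[OF EE_decay EE_decay])
      using ac t by auto
    finally show "norm (K1 * EE c t + K2 * EE a t)
        \<le> M + (norm (q0 0 - r 0 / (-a - -c)) + norm (r 0 / (-a - -c)))" .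
  qed
  then have A10: "A1 = 0" and C10: "C1 = 0" and K0: "K1 = 0" "K2 = 0" using Pa0 Pc0 by (auto simp: K1_def K2_def)
  have u0: "u 0 = 0" using C10 ac(3) by (simp add: C1_def)
  have v0: "v 0 = 0" using A10 u0 by (simp add: A1_def)
  have "b 2 0 = v 0 - sg * b 1 0 - p * b 0 0" by (simp add: v_def)
  then show "b 2 0 = -(a+c) * b 1 0 - a*c * b 0 0"
    using v0 by (simp add: sg_def p_def algebra_simps)
  have v'0: "v' 0 = 0" using u0 v0 by (simp add: u_def)
  have "b 3 0 = v' 0 - sg * b 2 0 - p * b 1 0" by (simp add: v'_def)
  then show "b 3 0 = -(a+c) * b 2 0 - a*c * b 1 0"
    using v'0 by (simp add: sg_def p_def algebra_simps)
  assume z: "b 0 0 = 0" "b 1 0 = 0"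
  have "r 0 = 0" using z K0 by (simp add: r_def q0_def q1_def)
  moreover have "q0 0 = 0" using z K0 by (simp add: q0_def)
  ultimately have z0: "r 0 = 0" "q0 0 = 0" by blast+
  show "\<forall>t\<ge>0. b 0 t = 0"
  proof (intro allI impI)
    fix t :: real assume t: "t \<ge> 0"
    have "q0 t = 0" using qq0[OF t] z0 by simp
    then show "b 0 t = 0" using K0 by (simp add: q0_def)
  qed
qed

lemma tangent:
  fixes b :: "nat \<Rightarrow> real \<Rightarrow> complex"
  assumes hdr: "\<And>k. hdr (b k) (b (Suc k))"
    and ode: "\<And>t. t \<ge> 0 \<Longrightarrow> b 2 t = 0"
    and bd: "\<And>t. t \<ge> 0 \<Longrightarrow> norm (b 0 t) \<le> M"
  shows "b 1 0 = 0" "\<forall>t\<ge>0. b 0 t = b 0 0"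
proof -
  define f0 where "f0 = b 0"
  define f1 where "f1 = b 1"
  have h0: "hdr f0 f1" using hdr[of 0] by (simp add: f0_def f1_def)
  have h1: "hdr f1 (b 2)" using hdr[of 1] by (simp add: f1_def numeral_2_eq_2)
  have "hdr f1 (\<lambda>t. 0 * f1 t)" using h1 by (rule hd_cong) (simp add: ode)
  then have b1: "f1 t = f1 0" if "t \<ge> 0" for t using L1[of f1 0 t] that by (simp add: EE_def)
  have "hdr f0 (\<lambda>t. f1 0)" using h0 by (rule hd_cong) (rule b1)
  then have b0: "f0 t = f0 0 + of_real t * f1 0" if "t \<ge> 0" for t using L_affine that by blast
  have bd': "norm (f0 t) \<le> M" if "t \<ge> 0" for t using bd[OF that] by (simp add: f0_def)
  have z: "f1 0 = 0"
  proof (rule ccontr)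
    assume ne: "f1 0 \<noteq> 0"
    define t where "t = (\<bar>M\<bar> + norm (f0 0) + 1) / norm (f1 0)"
    have t0: "t \<ge> 0" by (simp add: t_def)
    have "norm (of_real t * f1 0) = t * norm (f1 0)"
      using t0 by (simp add: norm_mult)
    also have "\<dots> = \<bar>M\<bar> + norm (f0 0) + 1" using ne by (simp add: t_def)
    finally have "norm (of_real t * f1 0) = \<bar>M\<bar> + norm (f0 0) + 1" .
    moreover have "norm (of_real t * f1 0) \<le> norm (f0 t) + norm (f0 0)"
    proof -
      have eq: "of_real t * f1 0 = f0 t - f0 0" using b0[OF t0] by simp
      show ?thesis unfolding eq by (rule norm_triangle_ineq4)
    qed
    ultimately show False using bd'[OF t0] by linarith
  qed
  then show "b 1 0 = 0" by (simp add: f1_def)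
  show "\<forall>t\<ge>0. b 0 t = b 0 0"
  proof (intro allI impI)
    fix t :: real assume t: "t \<ge> 0"
    have "f0 t = f0 0" using b0[OF t] z by simp
    then show "b 0 t = b 0 0" by (simp add: f0_def)
  qed
qed




lemma cdot_comm: "cdot u v = cdot v u"
  by (simp add: cdot_def mult.commute)

lemma bl_cdot: "bounded_linear (\<lambda>x. cdot x w)"
  unfolding cdot_def
  by (intro bounded_linear_add bounded_linear_compose[OF bounded_linear_mult_left bounded_linear_fst]
      bounded_linear_compose[OF bounded_linear_mult_left bounded_linear_snd])

lemma proj:
  assumes "higher_derivs_on D {0..}"
  shows "hdr (\<lambda>t. cdot (D k t) w) (\<lambda>t. cdot (D (Suc k) t) w)"
  using assms unfolding hdr_def higher_derivs_on_def
  by (auto intro: bounded_linear.has_vector_derivative[OF bl_cdot])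

lemma cdot_bound: "norm (cdot x w) \<le> norm x * (norm (fst w) + norm (snd w))"
proof -
  have "norm (cdot x w) \<le> norm (fst x) * norm (fst w) + norm (snd x) * norm (snd w)"
    unfolding cdot_def by (metis norm_mult norm_triangle_ineq)
  also have "\<dots> \<le> norm x * norm (fst w) + norm x * norm (snd w)"
    using norm_fst_le[of "fst x" "snd x"] norm_snd_le[of "snd x" "fst x"]
    by (intro add_mono mult_right_mono) auto
  finally show ?thesis by (simp add: algebra_simps)
qed

lemma proj_bound:
  assumes "bounded (D 0 ` {0..})"
  shows "\<exists>M. \<forall>t\<ge>0. norm (cdot (D 0 t) w) \<le> M"
proof -
  obtain B where B0: "\<forall>y\<in>D 0 ` {0..}. norm y \<le> B" using assms bounded_iff by blast
  then have B: "\<And>y. y \<in> D 0 ` {0..} \<Longrightarrow> norm y \<le> B" by blast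
  have "norm (cdot (D 0 t) w) \<le> B * (norm (fst w) + norm (snd w))" if "t \<ge> 0" for t
    using cdot_bound[of "D 0 t" w] B[of "D 0 t"] that
    by (meson atLeast_iff image_eqI mult_right_mono add_nonneg_nonneg norm_ge_zero order_trans)
  then show ?thesis by blast
qed

lemma rot_dot: "cdot Y (cvec (rot phi d)) = of_real (cos phi) * cdot Y (cvec d) + of_real (sin phi) * cdot Y (cvec (perp d))"
  by (simp add: cdot_def cvec_def rot_def perp_def algebra_simps)

lemma perp_rot: "perp (rot phi d) = rot phi (perp d)"
  by (simp add: perp_def rot_def algebra_simps)

lemma perp_perp_dot: "cdot Y (cvec (perp (perp d))) = - cdot Y (cvec d)"
  by (simp add: cdot_def cvec_def rot_def perp_def algebra_simps)

lemma perp_rot_dot: "cdot Y (cvec (perp (rot phi d))) = of_real (cos phi) * cdot Y (cvec (perp d)) - of_real (sin phi) * cdot Y (cvec d)"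
  unfolding perp_rot rot_dot perp_perp_dot by simp

lemma norm_rot: "norm (rot phi d) = norm d"
proof -
  have "(cos phi * fst d - sin phi * snd d)\<^sup>2 + (sin phi * fst d + cos phi * snd d)\<^sup>2
        = ((sin phi)\<^sup>2 + (cos phi)\<^sup>2) * ((fst d)\<^sup>2 + (snd d)\<^sup>2)"
    by (simp only: power2_eq_square algebra_simps)
  also have "\<dots> = (fst d)\<^sup>2 + (snd d)\<^sup>2" by (simp only: sin_cos_squared_add mult_1)
  finally have e: "(cos phi * fst d - sin phi * snd d)\<^sup>2 + (sin phi * fst d + cos phi * snd d)\<^sup>2
        = (fst d)\<^sup>2 + (snd d)\<^sup>2" .
  show ?thesis unfolding norm_prod_def rot_def using e by simp
qed

lemma unit_zero:
  assumes "norm d = 1" "cdot Y (cvec d) = 0" "cdot Y (cvec (perp d)) = 0"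
  shows "Y = 0"
proof -
  obtain x y where d: "d = (x, y)" by (cases d)
  obtain Y1 Y2 where Y: "Y = (Y1, Y2)" by (cases Y)
  have xy: "x\<^sup>2 + y\<^sup>2 = 1" using assms(1) by (simp add: d norm_Pair)
  have e1: "Y1 * of_real x + Y2 * of_real y = 0" using assms(2) by (simp add: d Y cdot_def cvec_def)
  have e2: "- (Y1 * of_real y) + Y2 * of_real x = 0"
    using assms(3) by (simp add: d Y cdot_def cvec_def perp_def rot_def)
  have cxy: "(of_real x :: complex)\<^sup>2 + (of_real y)\<^sup>2 = 1"
    by (metis xy of_real_add of_real_power of_real_1)
  have "Y1 = Y1 * ((of_real x)\<^sup>2 + (of_real y)\<^sup>2)" using cxy by simp
  also have "\<dots> = of_real x * (Y1 * of_real x + Y2 * of_real y) - of_real y * (- (Y1 * of_real y) + Y2 * of_real x)"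
    by (simp add: power2_eq_square algebra_simps)
  finally have 1: "Y1 = 0" using e1 e2 by simp
  have "Y2 = Y2 * ((of_real x)\<^sup>2 + (of_real y)\<^sup>2)" using cxy by simp
  also have "\<dots> = of_real y * (Y1 * of_real x + Y2 * of_real y) + of_real x * (- (Y1 * of_real y) + Y2 * of_real x)"
    by (simp add: power2_eq_square algebra_simps)
  finally have 2: "Y2 = 0" using e1 e2 by simp
  show ?thesis using 1 2 Y by (simp add: zero_prod_def)
qed

lemma real_pow4: "(of_real x :: complex) ^ 4 = of_real (x ^ 4)" by simp

lemma exists_root:
  assumes "Re s > 0"
  shows "\<exists>a. Re a > 0 \<and> Im a > 0 \<and> a ^ 4 = - s"
proof -
  define r where "r = csqrt (csqrt (- s))"
  have r4: "r ^ 4 = - s"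
  proof -
    have "r ^ 4 = (r\<^sup>2)\<^sup>2" by simp
    then show ?thesis by (simp add: r_def)
  qed
  have reneg: "Re (r ^ 4) < 0" using r4 assms by simp
  have x0: "Re r \<noteq> 0"
  proof
    assume "Re r = 0"
    then have "r = \<i> * of_real (Im r)" by (simp add: complex_eq_iff)
    then have "r ^ 4 = \<i> ^ 4 * (of_real (Im r)) ^ 4" by (metis power_mult_distrib)
    also have "\<dots> = of_real (Im r ^ 4)" by (simp add: power4_eq_xxxx)
    finally have "Re (r ^ 4) = Im r ^ 4" by simp
    then show False using reneg by (metis not_less zero_le_power_eq_numeral even_numeral le_less_trans) 
  qed
  have y0: "Im r \<noteq> 0"
  proof
    assume "Im r = 0"
    then have "r = of_real (Re r)" by (simp add: complex_eq_iff)
    then have "r ^ 4 = of_real (Re r ^ 4)" by (metis of_real_power)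
    then have "Re (r ^ 4) = Re r ^ 4" by simp
    then show False using reneg by (metis not_less zero_le_power_eq_numeral even_numeral le_less_trans)
  qed
  have i4: "\<i> ^ 4 = 1" by (simp add: power4_eq_xxxx)
  consider "Re r > 0" "Im r > 0" | "Re r < 0" "Im r > 0" | "Re r < 0" "Im r < 0" | "Re r > 0" "Im r < 0"
    using x0 y0 by linarith
  then show ?thesis
  proof cases
    case 1 then show ?thesis using r4 by blast
  next
    case 2
    have "(- \<i> * r) ^ 4 = - s" using r4 i4 by (simp add: power_mult_distrib)
    then show ?thesis using 2 by (intro exI[of _ "- \<i> * r"]) simp
  next
    case 3
    have "(- r) ^ 4 = - s" using r4 by simp
    then show ?thesis using 3 by (intro exI[of _ "- r"]) simp
  next
    case 4
    have "(\<i> * r) ^ 4 = - s" using r4 i4 by (simp add: power_mult_distrib)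
    then show ?thesis using 4 by (intro exI[of _ "\<i> * r"]) simp
  qed
qed




lemma ext0_hd:
  assumes "\<And>k. hdr (b k) (b (Suc k))" "\<And>t. t > 0 \<Longrightarrow> b i t = K * b j t" "t \<ge> 0"
  shows "b i t = K * b j t"
  by (rule ext0[OF hd_cont[OF assms(1)] continuous_on_mult_left[OF hd_cont[OF assms(1)]] assms(2,3)])

lemma cdot_zero: "cdot 0 w = 0" by (simp add: cdot_def)

theorem mainTheorem6:
  fixes d1 d2 d3 :: "real \<times> real"
    and th12 th13 :: real
    and s :: complex
    and D1 D2 D3 :: "nat \<Rightarrow> real \<Rightarrow> complex \<times> complex"
  assumes d1_unit: "norm d1 = 1"
    and d2_def: "d2 = rot (- th12) d1"
    and d3_def: "d3 = rot th13 d1"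
    and th12: "0 < th12" "th12 < pi"
    and th13: "0 < th13" "th13 < pi"
    and th_sum: "th12 + th13 \<ge> pi"
    and s_pos: "Re s > 0"
    and smooth1: "higher_derivs_on D1 {0..}"
    and smooth2: "higher_derivs_on D2 {0..}"
    and smooth3: "higher_derivs_on D3 {0..}"
    and bdd1: "bounded (D1 0 ` {0..})"
    and bdd2: "bounded (D2 0 ` {0..})"
    and bdd3: "bounded (D3 0 ` {0..})"
    and eq1a: "\<And>t. t > 0 \<Longrightarrow>
        s * cdot (D1 0 t) (cvec (perp d1)) = cdot (D1 2 t) (cvec (perp d1))"
    and eq1b: "\<And>t. t > 0 \<Longrightarrow> cdot (cvec d1) (D1 2 t) = 0"
    and eq2a: "\<And>t. t > 0 \<Longrightarrow>
        s * cdot (D2 0 t) (cvec (perp d2)) = - cdot (D2 4 t) (cvec (perp d2))"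
    and eq2b: "\<And>t. t > 0 \<Longrightarrow> cdot (cvec d2) (D2 2 t) = 0"
    and eq3a: "\<And>t. t > 0 \<Longrightarrow>
        s * cdot (D3 0 t) (cvec (perp d3)) = - cdot (D3 4 t) (cvec (perp d3))"
    and eq3b: "\<And>t. t > 0 \<Longrightarrow> cdot (cvec d3) (D3 2 t) = 0"
    and bc_i: "D1 0 0 = D2 0 0" "D2 0 0 = D3 0 0"
    and bc_ii2: "cdot (cvec d1) (D2 1 0) + cdot (cvec d2) (D1 1 0)
        - cdot (cvec d1) (cvec d2) * (cdot (cvec d1) (D1 1 0) + cdot (cvec d2) (D2 1 0)) = 0"
    and bc_ii3: "cdot (cvec d1) (D3 1 0) + cdot (cvec d3) (D1 1 0)
        - cdot (cvec d1) (cvec d3) * (cdot (cvec d1) (D1 1 0) + cdot (cvec d3) (D3 1 0)) = 0"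
    and bc_iii: "cdot (D2 2 0) (cvec (perp d2)) = - cdot (D3 2 0) (cvec (perp d3))"
    and bc_iv: "cdot (D2 3 0) (cvec (perp d2)) = cdot (D3 3 0) (cvec (perp d3))"
  shows "\<forall>t\<ge>0. D1 0 t = 0 \<and> D2 0 t = 0 \<and> D3 0 t = 0"
proof -
  define t1 where "t1 k t = cdot (D1 k t) (cvec d1)" for k t
  define n1 where "n1 k t = cdot (D1 k t) (cvec (perp d1))" for k t
  define t2 where "t2 k t = cdot (D2 k t) (cvec d2)" for k t
  define n2 where "n2 k t = cdot (D2 k t) (cvec (perp d2))" for k t
  define t3 where "t3 k t = cdot (D3 k t) (cvec d3)" for k t
  define n3 where "n3 k t = cdot (D3 k t) (cvec (perp d3))" for k t
  have ht1: "\<And>k. hdr (t1 k) (t1 (Suc k))" unfolding t1_def[abs_def] by (rule proj[OF smooth1])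
  have hn1: "\<And>k. hdr (n1 k) (n1 (Suc k))" unfolding n1_def[abs_def] by (rule proj[OF smooth1])
  have ht2: "\<And>k. hdr (t2 k) (t2 (Suc k))" unfolding t2_def[abs_def] by (rule proj[OF smooth2])
  have hn2: "\<And>k. hdr (n2 k) (n2 (Suc k))" unfolding n2_def[abs_def] by (rule proj[OF smooth2])
  have ht3: "\<And>k. hdr (t3 k) (t3 (Suc k))" unfolding t3_def[abs_def] by (rule proj[OF smooth3])
  have hn3: "\<And>k. hdr (n3 k) (n3 (Suc k))" unfolding n3_def[abs_def] by (rule proj[OF smooth3])
  obtain Mt1 where Mt1: "\<And>t. t \<ge> 0 \<Longrightarrow> norm (t1 0 t) \<le> Mt1" using proj_bound[where D=D1, OF bdd1] unfolding t1_def by blast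
  obtain Mn1 where Mn1: "\<And>t. t \<ge> 0 \<Longrightarrow> norm (n1 0 t) \<le> Mn1" using proj_bound[where D=D1, OF bdd1] unfolding n1_def by blast
  obtain Mt2 where Mt2: "\<And>t. t \<ge> 0 \<Longrightarrow> norm (t2 0 t) \<le> Mt2" using proj_bound[where D=D2, OF bdd2] unfolding t2_def by blast
  obtain Mn2 where Mn2: "\<And>t. t \<ge> 0 \<Longrightarrow> norm (n2 0 t) \<le> Mn2" using proj_bound[where D=D2, OF bdd2] unfolding n2_def by blast
  obtain Mt3 where Mt3: "\<And>t. t \<ge> 0 \<Longrightarrow> norm (t3 0 t) \<le> Mt3" using proj_bound[where D=D3, OF bdd3] unfolding t3_def by blast
  obtain Mn3 where Mn3: "\<And>t. t \<ge> 0 \<Longrightarrow> norm (n3 0 t) \<le> Mn3" using proj_bound[where D=D3, OF bdd3] unfolding n3_def by blast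
  have ot1: "t1 2 t = 0" if "t \<ge> 0" for t
    using ext0_hd[where b=t1, OF ht1, of 2 0 0 t] eq1b that by (simp add: t1_def cdot_comm)
  have ot2: "t2 2 t = 0" if "t \<ge> 0" for t
    using ext0_hd[where b=t2, OF ht2, of 2 0 0 t] eq2b that by (simp add: t2_def cdot_comm)
  have ot3: "t3 2 t = 0" if "t \<ge> 0" for t
    using ext0_hd[where b=t3, OF ht3, of 2 0 0 t] eq3b that by (simp add: t3_def cdot_comm)
  have on1: "n1 2 t = s * n1 0 t" if "t \<ge> 0" for t
    using ext0_hd[where b=n1, OF hn1, of 2 s 0 t] eq1a that by (simp add: n1_def)
  have on2: "n2 4 t = - s * n2 0 t" if "t \<ge> 0" for t
    using ext0_hd[where b=n2, OF hn2, of 4 "-s" 0 t] eq2a that by (simp add: n2_def)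
  have on3: "n3 4 t = - s * n3 0 t" if "t \<ge> 0" for t
    using ext0_hd[where b=n3, OF hn3, of 4 "-s" 0 t] eq3a that by (simp add: n3_def)
  obtain a where a: "Re a > 0" "Im a > 0" "a ^ 4 = - s" using exists_root[OF s_pos] by blast
  define c where "c = - \<i> * a"
  have c0: "Re c > 0" using a by (simp add: c_def)
  have ac: "a \<noteq> c" using a by (auto simp: c_def complex_eq_iff)
  have ac2: "a\<^sup>2 + c\<^sup>2 = 0" by (simp add: c_def power_mult_distrib)
  have sac: "s = a\<^sup>2 * c\<^sup>2"
  proof -
    have c2: "c\<^sup>2 = - (a\<^sup>2)" by (simp add: c_def power_mult_distrib)
    have e1: "a\<^sup>2 * c\<^sup>2 = - (a ^ 4)" unfolding c2 by (simp add: power4_eq_xxxx power2_eq_square mult.assoc)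
    have e2: "s = - (a ^ 4)" using a(3) by simp
    show ?thesis unfolding e1 e2 ..
  qed
  define mu where "mu = a * c"
  have mu2: "mu\<^sup>2 = s" unfolding mu_def power_mult_distrib using sac by simp
  have remu: "Re mu > 0" using a by (simp add: mu_def c_def)
  define sg where "sg = a + c"
  have resg: "Re sg > 0" using a c0 by (simp add: sg_def)
  have sg0: "sg \<noteq> 0" using resg by auto
  have mu0: "mu \<noteq> 0" using remu by auto
  note T1 = tangent[where b=t1, OF ht1 ot1 Mt1]
  note T2 = tangent[where b=t2, OF ht2 ot2 Mt2]
  note T3 = tangent[where b=t3, OF ht3 ot3 Mt3]
  note B1 = branch1[where b=n1, OF hn1 on1 Mn1 mu2 remu]
  note B2 = branch4[where b=n2, OF hn2 on2 Mn2 a(1) c0 ac ac2 sac]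
  note B3 = branch4[where b=n3, OF hn3 on3 Mn3 a(1) c0 ac ac2 sac]
  define C2 where "C2 = (of_real (cos th12) :: complex)"
  define S2 where "S2 = (of_real (sin th12) :: complex)"
  define C3 where "C3 = (of_real (cos th13) :: complex)"
  define S3 where "S3 = (of_real (sin th13) :: complex)"
  have CS2: "C2 * C2 + S2 * S2 = 1"
  proof -
    have "cos th12 * cos th12 + sin th12 * sin th12 = 1" using sin_cos_squared_add2[of th12] by (simp add: power2_eq_square)
    then have "(of_real (cos th12 * cos th12 + sin th12 * sin th12) :: complex) = 1" by simp
    then show ?thesis unfolding C2_def S2_def by (simp only: of_real_mult[symmetric] of_real_add[symmetric])
  qed
  have CS3: "C3 * C3 + S3 * S3 = 1"
  proof -
    have "cos th13 * cos th13 + sin th13 * sin th13 = 1" using sin_cos_squared_add2[of th13] by (simp add: power2_eq_square)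
    then have "(of_real (cos th13 * cos th13 + sin th13 * sin th13) :: complex) = 1" by simp
    then show ?thesis unfolding C3_def S3_def by (simp only: of_real_mult[symmetric] of_real_add[symmetric])
  qed
  have sin12: "sin th12 > 0" using th12 by (simp add: sin_gt_zero)
  have sin13: "sin th13 > 0" using th13 by (simp add: sin_gt_zero)
  have S20: "S2 \<noteq> 0" using sin12 by (simp add: S2_def)
  have S30: "S3 \<noteq> 0" using sin13 by (simp add: S3_def)
  have f2: "cdot Y (cvec d2) = C2 * cdot Y (cvec d1) - S2 * cdot Y (cvec (perp d1))" for Y
    by (simp add: d2_def rot_dot C2_def S2_def)
  have f2p: "cdot Y (cvec (perp d2)) = C2 * cdot Y (cvec (perp d1)) + S2 * cdot Y (cvec d1)" for Y
    by (simp add: d2_def perp_rot_dot C2_def S2_def)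
  have f3: "cdot Y (cvec d3) = C3 * cdot Y (cvec d1) + S3 * cdot Y (cvec (perp d1))" for Y
    by (simp add: d3_def rot_dot C3_def S3_def)
  have f3p: "cdot Y (cvec (perp d3)) = C3 * cdot Y (cvec (perp d1)) - S3 * cdot Y (cvec d1)" for Y
    by (simp add: d3_def perp_rot_dot C3_def S3_def)
  have n21: "n2 1 0 = n1 1 0"
  proof -
    define T where "T = cdot (D2 1 0) (cvec d1)"
    define N where "N = cdot (D2 1 0) (cvec (perp d1))"
    have h1: "C2 * T - S2 * N = 0" using T2(1) f2[of "D2 1 0"] by (simp add: t2_def T_def N_def)
    have h2: "n2 1 0 = C2 * N + S2 * T" using f2p[of "D2 1 0"] by (simp add: n2_def T_def N_def)
    have "C2 * (C2 * T - S2 * N) + S2 * (C2 * N + S2 * T) = (C2 * C2 + S2 * S2) * T"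
      by (simp add: algebra_simps)
    then have eT: "T = S2 * n2 1 0" unfolding h1 h2[symmetric] CS2 by simp
    have eX: "cdot (cvec d2) (D1 1 0) = - S2 * n1 1 0"
      using f2[of "D1 1 0"] T1(1) by (simp add: cdot_comm t1_def n1_def)
    have "cdot (cvec d1) (D1 1 0) = 0" using T1(1) by (simp add: t1_def cdot_comm)
    moreover have "cdot (cvec d2) (D2 1 0) = 0" using T2(1) by (simp add: t2_def cdot_comm)
    ultimately have "cdot (cvec d1) (D2 1 0) + cdot (cvec d2) (D1 1 0) = 0" using bc_ii2 by simp
    then have "S2 * (n2 1 0 - n1 1 0) = 0" using eT eX by (simp add: T_def cdot_comm algebra_simps)
    then show ?thesis using S20 by simp
  qed
  have n31: "n3 1 0 = n1 1 0"
  proof -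
    define T where "T = cdot (D3 1 0) (cvec d1)"
    define N where "N = cdot (D3 1 0) (cvec (perp d1))"
    have h1: "C3 * T + S3 * N = 0" using T3(1) f3[of "D3 1 0"] by (simp add: t3_def T_def N_def)
    have h2: "n3 1 0 = C3 * N - S3 * T" using f3p[of "D3 1 0"] by (simp add: n3_def T_def N_def)
    have "C3 * (C3 * T + S3 * N) - S3 * (C3 * N - S3 * T) = (C3 * C3 + S3 * S3) * T"
      by (simp add: algebra_simps)
    then have eT: "T = - S3 * n3 1 0" unfolding h1 h2[symmetric] CS3 by simp
    have eX: "cdot (cvec d3) (D1 1 0) = S3 * n1 1 0"
      using f3[of "D1 1 0"] T1(1) by (simp add: cdot_comm t1_def n1_def)
    have "cdot (cvec d1) (D1 1 0) = 0" using T1(1) by (simp add: t1_def cdot_comm)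
    moreover have "cdot (cvec d3) (D3 1 0) = 0" using T3(1) by (simp add: t3_def cdot_comm)
    ultimately have "cdot (cvec d1) (D3 1 0) + cdot (cvec d3) (D1 1 0) = 0" using bc_ii3 by simp
    then have "S3 * (n1 1 0 - n3 1 0) = 0" using eT eX by (simp add: T_def cdot_comm algebra_simps)
    then show ?thesis using S30 by simp
  qed
  define p where "p = D1 0 0"
  define P where "P = cdot p (cvec d1)"
  define Q where "Q = cdot p (cvec (perp d1))"
  have p2: "D2 0 0 = p" and p3: "D3 0 0 = p" using bc_i by (simp_all add: p_def)
  have n10: "n1 0 0 = Q" by (simp add: n1_def Q_def p_def)
  have n20: "n2 0 0 = C2 * Q + S2 * P" using f2p[of p] by (simp add: n2_def p2 P_def Q_def)
  have n30: "n3 0 0 = C3 * Q - S3 * P" using f3p[of p] by (simp add: n3_def p3 P_def Q_def)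
  have n11: "n1 1 0 = - mu * Q" using B1(1) n10 by simp
  have iii: "n2 2 0 = - n3 2 0" using bc_iii by (simp add: n2_def n3_def)
  have iv: "n2 3 0 = n3 3 0" using bc_iv by (simp add: n2_def n3_def)
  have "sg * n2 2 0 = sg * n3 2 0"
    using iv B2(2) B3(2) n21 n31 by (simp add: sg_def mu_def algebra_simps)
  then have "n2 2 0 = n3 2 0" using sg0 by simp
  then have z2: "n2 2 0 = 0" and z3: "n3 2 0 = 0" using iii by auto
  have "mu * (sg * Q - n2 0 0) = 0"
    using B2(1) z2 n21 n11 by (simp add: sg_def mu_def algebra_simps)
  then have e2: "C2 * Q + S2 * P = sg * Q" using mu0 n20 by simp
  have "mu * (sg * Q - n3 0 0) = 0"
    using B3(1) z3 n31 n11 by (simp add: sg_def mu_def algebra_simps)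
  then have e3: "C3 * Q - S3 * P = sg * Q" using mu0 n30 by simp
  have "S3 * (C2 * Q + S2 * P) + S2 * (C3 * Q - S3 * P) = S3 * (sg * Q) + S2 * (sg * Q)"
    using e2 e3 by simp
  then have "Q * (sg * (S2 + S3) - (S3 * C2 + S2 * C3)) = 0" by (simp add: algebra_simps)
  moreover have "sg * (S2 + S3) - (S3 * C2 + S2 * C3) \<noteq> 0"
  proof -
    have "S3 * C2 + S2 * C3 = of_real (sin (th12 + th13))"
      by (simp add: S2_def S3_def C2_def C3_def sin_add algebra_simps)
    moreover have "sin (th12 + th13) \<le> 0" using th_sum th12 th13 by (intro sin_le_zero) auto
    moreover have "Re (sg * (S2 + S3)) > 0"
      using resg sin12 sin13 by (simp add: S2_def S3_def)
    ultimately have r: "Re (sg * (S2 + S3) - (S3 * C2 + S2 * C3)) > 0" by simp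
    show ?thesis
    proof
      assume z: "sg * (S2 + S3) - (S3 * C2 + S2 * C3) = 0"
      have "Re (sg * (S2 + S3) - (S3 * C2 + S2 * C3)) = 0" by (simp only: z zero_complex.simps(1))
      with r show False by linarith
    qed
  qed
  ultimately have Q0: "Q = 0" by simp
  then have P0: "P = 0" using e2 S20 by simp
  have p0: "p = 0" by (rule unit_zero[OF d1_unit]) (use P0 Q0 in \<open>simp_all add: P_def Q_def\<close>)
  have un2: "norm d2 = 1" using d1_unit by (simp add: d2_def norm_rot)
  have un3: "norm d3 = 1" using d1_unit by (simp add: d3_def norm_rot)
  show ?thesis
  proof (intro allI impI conjI)
    fix t :: real assume t: "t \<ge> 0"
    show "D1 0 t = 0"
    proof (rule unit_zero[OF d1_unit])
      have tt: "t1 0 t = t1 0 0" using T1(2) t by blast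
      show "cdot (D1 0 t) (cvec d1) = 0" using tt p0 by (simp add: t1_def p_def cdot_zero)
      show "cdot (D1 0 t) (cvec (perp d1)) = 0" using B1(2) n10 Q0 t by (simp add: n1_def)
    qed
    show "D2 0 t = 0"
    proof (rule unit_zero[OF un2])
      have tt: "t2 0 t = t2 0 0" using T2(2) t by blast
      show "cdot (D2 0 t) (cvec d2) = 0" using tt p0 p2 by (simp add: t2_def cdot_zero)
      have "n2 0 0 = 0" using n20 P0 Q0 by simp
      moreover have "n2 1 0 = 0" using n21 n11 Q0 by simp
      ultimately show "cdot (D2 0 t) (cvec (perp d2)) = 0" using B2(3) t by (simp add: n2_def)
    qed
    show "D3 0 t = 0"
    proof (rule unit_zero[OF un3])
      have tt: "t3 0 t = t3 0 0" using T3(2) t by blast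
      show "cdot (D3 0 t) (cvec d3) = 0" using tt p0 p3 by (simp add: t3_def cdot_zero)
      have "n3 0 0 = 0" using n30 P0 Q0 by simp
      moreover have "n3 1 0 = 0" using n31 n11 Q0 by simp
      ultimately show "cdot (D3 0 t) (cvec (perp d3)) = 0" using B3(3) t by (simp add: n3_def)
    qed
  qed
qed


end
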